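(* Let $1\le k\le d$ and $\alpha\ge1$. Let $c$ be a map that sends every finite point set $P\subset\mathbb{R}^d$ to a subset $c(P)\subseteq P$ such that, for every such $P$, $c(P)$ is an $\alpha$-approximate core-set for the $k$-directional height of $P$. Then $c$ is an $\alpha^{2k}$-composable core-set for determinant maximization with parameter $k$: for every integer $m\ge1$ and all finite point sets $P_1,\dots,P_m\subset\mathbb{R}^d$, $$\mathrm{MAXDET}_k\Big(\bigcup_{i=1}^m c(P_i)\Big)\ge\frac{1}{\alpha^{2k}}\,\mathrm{MAXDET}_k\Big(\bigcup_{i=1}^m P_i\Big).$$
   Context: For a finite set $S\subset\mathbb{R}^d$ with $|S|=k$, let $M_S$ be the $k\times d$ matrix whose rows are the points of $S$. For finite $P\subset\mathbb{R}^d$, $\mathrm{MAXDET}_k(P)=\max_{S\subseteq P,\,|S|=k}\det(M_SM_S^\top)$. Let $\mathcal{H}_{k-1}$ be the set of all $(k-1)$-dimensional linear subspaces of $\mathbb{R}^d$, and $\mathrm{dist}(p,\mathcal{H})$ the Euclidean distance from point $p$ to subspace $\mathcal{H}$. The $k$-directional height of $P$ with respect to $\mathcal{H}\in\mathcal{H}_{k-1}$ is $h(P,\mathcal{H})=\max_{p\in P}\mathrm{dist}(p,\mathcal{H})$. A subset $C\subseteq P$ is an $\alpha$-approximate core-set for the $k$-directional height of $P$ if $h(C,\mathcal{H})\ge h(P,\mathcal{H})/\alpha$ for every $\mathcal{H}\in\mathcal{H}_{k-1}$. *)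

theory Defs
  imports "HOL-Analysis.Analysis"
begin

text \<open>Points of R^d are elements of a euclidean_space 'a, with d = DIM('a).
  For a list xs of k points (the rows of M_S), det(M_S M_S^T) is the determinant
  of the k x k Gram matrix (xs!i \<bullet> xs!j), written out by the Leibniz formula.\<close>

definition gram_det :: "'a::euclidean_space list \<Rightarrow> real" where
  "gram_det xs = (\<Sum>p | p permutes {..<length xs}.
       of_int (sign p) * (\<Prod>i<length xs. (xs ! i) \<bullet> (xs ! (p i))))"

text \<open>MAXDET_k(P): maximum over k-element subsets S of P (enumerated by a distinct list;
  the Gram determinant does not depend on the enumeration). Convention: 0 if P has fewer
  than k points.\<close>

definition maxdet :: "nat \<Rightarrow> 'a::euclidean_space set \<Rightarrow> real" where
  "maxdet k P = (let D = {gram_det xs | xs. distinct xs \<and> set xs \<subseteq> P \<and> length xs = k}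
                 in if D = {} then 0 else Max D)"

definition dir_height :: "'a::euclidean_space set \<Rightarrow> 'a set \<Rightarrow> real" where
  "dir_height P H = (if P = {} then 0 else Max ((\<lambda>p. infdist p H) ` P))"

definition approx_coreset_height :: "real \<Rightarrow> nat \<Rightarrow> 'a::euclidean_space set \<Rightarrow> 'a set \<Rightarrow> bool" where
  "approx_coreset_height \<alpha> k C P \<longleftrightarrow> C \<subseteq> P \<and>
     (\<forall>H. subspace H \<and> dim H = k - 1 \<longrightarrow> dir_height C H \<ge> dir_height P H / \<alpha>)"

end

theory Submission
  imports Defs "Jordan_Normal_Form.Determinant" "HOL-Combinatorics.List_Permutation"
begin

definition GM :: "'a::euclidean_space list \<Rightarrow> 'a list \<Rightarrow> real mat" where
  "GM L R = mat (length L) (length L) (\<lambda>(i,j). L!i \<bullet> R!j)"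

lemma GM_carrier[simp]: "GM L R \<in> carrier_mat (length L) (length L)"
  by (simp add: GM_def)

lemma GM_index[simp]: "i < length L \<Longrightarrow> j < length L \<Longrightarrow> GM L R $$ (i,j) = L!i \<bullet> R!j"
  by (simp add: GM_def)

lemma gram_det_GM: "gram_det xs = Determinant.det (GM xs xs)"
  by (simp add: gram_det_def det_def'[OF GM_carrier] atLeast0LessThan)

lemma GM_transpose: "length R = length L \<Longrightarrow> (GM L R)\<^sup>T = GM R L"
  by (rule eq_matI) (auto simp: GM_def inner_commute)

lemma det_GM_head:
  fixes ys R :: "'a::euclidean_space list"
  assumes "length R = Suc (length ys)"
  shows "\<exists>V. \<forall>u. Determinant.det (GM (u#ys) R) = u \<bullet> V"
proof -
  let ?n = "Suc (length ys)"
  define K where "K p = (\<Prod>i = Suc 0..<?n. (ys!(i - 1)) \<bullet> R!(p i))" for p :: "nat \<Rightarrow> nat"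
  define V where "V = (\<Sum>p | p permutes {0..<?n}. (of_int (sign p) * K p) *\<^sub>R R!(p 0))"
  have "Determinant.det (GM (u#ys) R) = u \<bullet> V" for u
  proof -
    have "Determinant.det (GM (u#ys) R) =
      (\<Sum>p | p permutes {0..<?n}. of_int (sign p) * (\<Prod>i = 0..<?n. GM (u#ys) R $$ (i, p i)))"
      using det_def'[OF GM_carrier, of "u#ys" R] by simp
    also have "\<dots> = (\<Sum>p | p permutes {0..<?n}. of_int (sign p) * ((u \<bullet> R!(p 0)) * K p))"
    proof (rule sum.cong[OF refl])
      fix p assume "p \<in> {p. p permutes {0..<?n}}"
      hence p: "p permutes {0..<?n}" by simp
      have pi: "i < ?n \<Longrightarrow> p i < ?n" for i using permutes_in_image[OF p] by simp
      have "(\<Prod>i = 0..<?n. GM (u#ys) R $$ (i, p i)) = GM (u#ys) R $$ (0, p 0) * (\<Prod>i = Suc 0..<?n. GM (u#ys) R $$ (i, p i))"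
        by (simp add: prod.atLeast_Suc_lessThan)
      also have "(\<Prod>i = Suc 0..<?n. GM (u#ys) R $$ (i, p i)) = K p"
        unfolding K_def by (rule prod.cong[OF refl]) (auto simp: pi nth_Cons')
      also have "GM (u#ys) R $$ (0, p 0) = u \<bullet> R!(p 0)" using pi[of 0] by simp
      finally show "of_int (sign p) * (\<Prod>i = 0..<?n. GM (u#ys) R $$ (i, p i)) = of_int (sign p) * ((u \<bullet> R!(p 0)) * K p)" by simp
    qed
    also have "\<dots> = u \<bullet> V" unfolding V_def inner_sum_right
      by (rule sum.cong[OF refl]) (simp add: algebra_simps)
    finally show ?thesis .
  qed
  thus ?thesis by blast
qed
lemma det_GM_head_ortho:
  fixes ys R :: "'a::euclidean_space list"
  assumes "length R = Suc (length ys)" and "y \<in> span (set ys)"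
  shows "Determinant.det (GM ((y + w)#ys) R) = Determinant.det (GM (w#ys) R)"
proof -
  obtain V where V: "\<And>u. Determinant.det (GM (u#ys) R) = u \<bullet> V"
    using det_GM_head[OF assms(1)] by blast
  have "z \<bullet> V = 0" if "z \<in> set ys" for z
  proof -
    have "\<exists>j<length ys. ys!j = z" using that by (simp add: in_set_conv_nth)
    then obtain j where j: "j < length ys" "ys!j = z" by blast
    have rr: "Matrix.row (GM (z # ys) R) 0 = Matrix.row (GM (z # ys) R) (Suc j)"
    proof (rule eq_vecI)
      show "dim_vec (Matrix.row (GM (z # ys) R) 0) = dim_vec (Matrix.row (GM (z # ys) R) (Suc j))" by simp
      fix i assume "i < dim_vec (Matrix.row (GM (z # ys) R) (Suc j))"
      hence i: "i < Suc (length ys)" by (simp add: GM_def)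
      have "Matrix.row (GM (z # ys) R) 0 $ i = z \<bullet> R!i" using i by (simp add: GM_def)
      also have "\<dots> = Matrix.row (GM (z # ys) R) (Suc j) $ i" using i j by (simp add: GM_def)
      finally show "Matrix.row (GM (z # ys) R) 0 $ i = Matrix.row (GM (z # ys) R) (Suc j) $ i" .
    qed
    have "Determinant.det (GM (z#ys) R) = 0"
      by (rule det_identical_rows[of "GM (z#ys) R" "Suc (length ys)" 0 "Suc j", OF _ _ _ _ rr]) (use j GM_carrier[of "z#ys" R] in simp_all)
    thus ?thesis using V by simp
  qed
  hence "y \<bullet> V = 0"
    using orthogonal_to_span[OF assms(2), of V] by (simp add: real_inner_class.orthogonal_def inner_commute)
  thus ?thesis using V by (simp add: inner_add_left)
qed

lemma det_GM_ortho:
  fixes ys :: "'a::euclidean_space list"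
  assumes "y \<in> span (set ys)" and "\<And>z. z \<in> span (set ys) \<Longrightarrow> w \<bullet> z = 0"
  shows "Determinant.det (GM ((y + w)#ys) ((y + w)#ys)) = (w \<bullet> w) * Determinant.det (GM ys ys)"
proof -
  let ?x = "y + w"
  have "Determinant.det (GM (?x#ys) (?x#ys)) = Determinant.det (GM (w#ys) (?x#ys))"
    by (rule det_GM_head_ortho[OF _ assms(1)]) simp
  also have "\<dots> = Determinant.det ((GM (w#ys) (?x#ys))\<^sup>T)"
    by (rule det_transpose[symmetric, OF GM_carrier])
  also have "(GM (w#ys) (?x#ys))\<^sup>T = GM (?x#ys) (w#ys)" by (rule GM_transpose) simp
  also have "Determinant.det (GM (?x#ys) (w#ys)) = Determinant.det (GM (w#ys) (w#ys))"
    by (rule det_GM_head_ortho[OF _ assms(1)]) simp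
  also have "\<dots> = (\<Sum>j<Suc (length ys). GM (w#ys) (w#ys) $$ (0,j) * cofactor (GM (w#ys) (w#ys)) 0 j)"
    using laplace_expansion_row[OF GM_carrier[of "w#ys" "w#ys"], of 0] by simp
  also have "\<dots> = GM (w#ys) (w#ys) $$ (0,0) * cofactor (GM (w#ys) (w#ys)) 0 0"
    unfolding sum.lessThan_Suc_shift using assms(2)[OF span_base] by (simp add: nth_mem)
  also have "cofactor (GM (w#ys) (w#ys)) 0 0 = Determinant.det (GM ys ys)"
  proof -
    have "mat_delete (GM (w#ys) (w#ys)) 0 0 = GM ys ys"
      by (rule eq_matI) (auto simp: mat_delete_def GM_def)
    thus ?thesis by (simp add: cofactor_def)
  qed
  finally show ?thesis by simp
qed

lemma gram_det_Nil: "gram_det [] = 1"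
  by (simp add: gram_det_GM GM_def)

lemma infdist_decomp:
  fixes S :: "'a::euclidean_space set"
  assumes "y \<in> span S" and "\<And>z. z \<in> span S \<Longrightarrow> w \<bullet> z = 0"
  shows "infdist (y + w) (span S) = norm w"
proof (rule antisym)
  show "infdist (y + w) (span S) \<le> norm w"
    using infdist_le[OF assms(1), of "y + w"] by (simp add: dist_norm)
  obtain z where z: "z \<in> span S" "infdist (y + w) (span S) = dist (y + w) z"
    using infdist_attains_inf[OF closed_subspace[OF subspace_span], of S "y + w"] span_zero by blast
  have "y - z \<in> span S" using z(1) assms(1) by (simp add: span_diff)
  hence o: "real_inner_class.orthogonal w (y - z)" using assms(2) by (simp add: real_inner_class.orthogonal_def)
  have "(norm (w + (y - z)))^2 = (norm w)^2 + (norm (y - z))^2"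
    by (rule norm_add_Pythagorean[OF o])
  hence "(norm w)^2 \<le> (norm (w + (y - z)))^2" by simp
  hence "norm w \<le> norm (w + (y - z))" by (simp add: power_mono_iff)
  thus "norm w \<le> infdist (y + w) (span S)" using z(2) by (simp add: dist_norm algebra_simps)
qed

lemma gram_det_Cons:
  fixes x :: "'a::euclidean_space"
  shows "gram_det (x#ys) = (infdist x (span (set ys)))^2 * gram_det ys"
proof -
  obtain y w where yw: "y \<in> span (set ys)" "\<And>z. z \<in> span (set ys) \<Longrightarrow> real_inner_class.orthogonal w z" "x = y + w"
    using orthogonal_subspace_decomp_exists by blast
  have o: "\<And>z. z \<in> span (set ys) \<Longrightarrow> w \<bullet> z = 0" using yw(2) by (simp add: real_inner_class.orthogonal_def)
  have "gram_det (x#ys) = (w \<bullet> w) * gram_det ys"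
    unfolding gram_det_GM yw(3) by (rule det_GM_ortho[OF yw(1) o])
  also have "w \<bullet> w = (infdist x (span (set ys)))^2"
    using infdist_decomp[OF yw(1) o] yw(3) by (simp add: power2_norm_eq_inner)
  finally show ?thesis .
qed

lemma gram_det_nonneg: "gram_det (xs::'a::euclidean_space list) \<ge> 0"
  by (induction xs) (auto simp: gram_det_Nil gram_det_Cons)

lemma gram_det_nonzero_dim:
  fixes xs :: "'a::euclidean_space list"
  shows "gram_det xs \<noteq> 0 \<Longrightarrow> dim (set xs) = length xs"
proof (induction xs)
  case Nil thus ?case by simp
next
  case (Cons x ys)
  have i: "infdist x (span (set ys)) \<noteq> 0" and g: "gram_det ys \<noteq> 0"
    using Cons.prems by (auto simp: gram_det_Cons)
  have "x \<notin> span (set ys)" using i infdist_le[of x "span (set ys)" x] infdist_nonneg[of x] by force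
  thus ?case using Cons.IH[OF g] by (simp add: dim_insert)
qed

lemma gram_det_nonzero_distinct:
  fixes xs :: "'a::euclidean_space list"
  assumes "gram_det xs \<noteq> 0" shows "distinct xs"
proof -
  have "length xs = dim (set xs)" using gram_det_nonzero_dim[OF assms] by simp
  also have "\<dots> \<le> card (set xs)" by (rule dim_le_card) (auto intro: span_base)
  finally have "card (set xs) = length xs" using card_length[of xs] by linarith
  thus ?thesis by (simp add: card_distinct)
qed
lemma gram_det_permute:
  fixes xs :: "'a::euclidean_space list"
  assumes p: "p permutes {..<length xs}"
  shows "gram_det (permute_list p xs) = gram_det xs"
proof -
  let ?n = "length xs"
  let ?A = "GM xs xs"
  have p': "p permutes {0..<?n}" using p by (simp add: atLeast0LessThan)
  have pi: "i < ?n \<Longrightarrow> p i < ?n" for i using permutes_in_image[OF p] by simp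
  define B where "B = mat ?n ?n (\<lambda>(i,j). ?A $$ (p i, j))"
  define C where "C = mat ?n ?n (\<lambda>(i,j). B\<^sup>T $$ (p i, j))"
  have Bc: "B \<in> carrier_mat ?n ?n" by (simp add: B_def)
  have dB: "Determinant.det B = of_int (sign p) * Determinant.det ?A"
    unfolding B_def by (rule det_permute_rows[OF GM_carrier p'])
  have dC: "Determinant.det C = of_int (sign p) * Determinant.det (B\<^sup>T)"
    unfolding C_def by (rule det_permute_rows[OF _ p']) (simp add: Bc)
  have "GM (permute_list p xs) (permute_list p xs) = C\<^sup>T"
    by (rule eq_matI) (auto simp: GM_def C_def B_def permute_list_def pi)
  hence "gram_det (permute_list p xs) = Determinant.det C"
    using det_transpose[of C ?n] by (simp add: gram_det_GM C_def)
  also have "\<dots> = (of_int (sign p))^2 * Determinant.det ?A"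
    using dC dB det_transpose[OF Bc] by (simp add: power2_eq_square)
  also have "(of_int (sign p) :: real)^2 = 1" by (simp add: sign_def)
  finally show ?thesis by (simp add: gram_det_GM)
qed

lemma gram_det_rotate:
  fixes x :: "'a::euclidean_space"
  shows "gram_det (ys @ [x]) = gram_det (x # ys)"
proof -
  have "mset (ys @ [x]) = mset (x # ys)" by simp
  then obtain p where "p permutes {..<length (x#ys)}" "permute_list p (x#ys) = ys @ [x]"
    by (rule mset_eq_permutation)
  thus ?thesis using gram_det_permute by metis
qed
lemma maxdet_facts:
  fixes A :: "'a::euclidean_space set"
  assumes "finite A"
  shows "maxdet k A \<ge> 0"
    and "distinct zs \<Longrightarrow> set zs \<subseteq> A \<Longrightarrow> length zs = k \<Longrightarrow> gram_det zs \<le> maxdet k A"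
    and "maxdet k A = 0 \<or> (\<exists>xs. distinct xs \<and> set xs \<subseteq> A \<and> length xs = k \<and> maxdet k A = gram_det xs)"
proof -
  define D where "D = {gram_det xs | xs. distinct xs \<and> set xs \<subseteq> A \<and> length xs = k}"
  have md: "maxdet k A = (if D = {} then 0 else Max D)" unfolding maxdet_def D_def Let_def by (rule refl)
  have "D \<subseteq> gram_det ` {xs. set xs \<subseteq> A \<and> length xs = k}" unfolding D_def by blast
  hence fD: "finite D" using finite_lists_length_eq[OF assms] by (meson finite_surj)
  have Dnn: "d \<in> D \<Longrightarrow> d \<ge> 0" for d unfolding D_def using gram_det_nonneg by blast
  show "maxdet k A \<ge> 0"
  proof (cases "D = {}")
    case False
    then obtain d where "d \<in> D" by blast
    have "0 \<le> d" "d \<le> Max D" using \<open>d \<in> D\<close> Dnn Max_ge[OF fD] by auto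
    thus ?thesis using md False by simp
  qed (simp add: md)
  show "distinct zs \<Longrightarrow> set zs \<subseteq> A \<Longrightarrow> length zs = k \<Longrightarrow> gram_det zs \<le> maxdet k A"
  proof -
    assume "distinct zs" "set zs \<subseteq> A" "length zs = k"
    hence "gram_det zs \<in> D" unfolding D_def by blast
    thus ?thesis using md Max_ge[OF fD] by auto
  qed
  show "maxdet k A = 0 \<or> (\<exists>xs. distinct xs \<and> set xs \<subseteq> A \<and> length xs = k \<and> maxdet k A = gram_det xs)"
  proof (cases "D = {}")
    case False
    have "Max D \<in> D" using Max_in[OF fD False] .
    then obtain xs where xs: "distinct xs" "set xs \<subseteq> A" "length xs = k" "Max D = gram_det xs"
      unfolding D_def by blast
    show ?thesis by (intro disjI2 exI[of _ xs]) (simp add: md False xs)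
  qed (simp add: md)
qed

lemma dir_height_ge:
  assumes "finite P" "x \<in> P" shows "infdist x H \<le> dir_height P H"
  using assms by (auto simp: dir_height_def intro!: Max_ge)

lemma dir_height_attained:
  assumes "finite P" "P \<noteq> {}" shows "\<exists>q\<in>P. dir_height P H = infdist q H"
proof -
  have "Max ((\<lambda>p. infdist p H) ` P) \<in> (\<lambda>p. infdist p H) ` P" using assms by (intro Max_in) auto
  then obtain q where "q \<in> P" "Max ((\<lambda>p. infdist p H) ` P) = infdist q H" by blast
  thus ?thesis using assms(2) by (auto simp: dir_height_def)
qed

lemma replace_step:
  fixes c :: "'a::euclidean_space set \<Rightarrow> 'a set" and k :: nat and \<alpha> :: real
  assumes "\<alpha> \<ge> 1"
    and "approx_coreset_height \<alpha> k (c P) P" and "finite P" and "c P \<subseteq> P"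
    and "x \<in> P" and "gram_det (x#ys) > 0" and "length ys = k - 1"
  shows "\<exists>q\<in>c P. gram_det (q#ys) \<ge> gram_det (x#ys) / \<alpha>^2"
proof -
  let ?H = "span (set ys)"
  have g: "gram_det ys > 0" and ix: "infdist x ?H > 0"
    using assms(6) gram_det_nonneg[of ys] infdist_nonneg[of x ?H]
    by (auto simp: gram_det_Cons zero_less_mult_iff)
  have "dim ?H = k - 1" using gram_det_nonzero_dim[of ys] g assms(7) by (simp add: dim_span)
  hence hc: "dir_height (c P) ?H \<ge> dir_height P ?H / \<alpha>"
    using assms(2) by (auto simp: approx_coreset_height_def)
  have "dir_height P ?H / \<alpha> \<ge> infdist x ?H / \<alpha>"
    using dir_height_ge[OF assms(3,5)] assms(1) by (simp add: divide_right_mono)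
  with hc have hq: "dir_height (c P) ?H \<ge> infdist x ?H / \<alpha>" by linarith
  have fc: "finite (c P)" using assms(3,4) finite_subset by blast
  have "c P \<noteq> {}"
  proof
    assume "c P = {}"
    hence "dir_height (c P) ?H = 0" by (simp add: dir_height_def)
    with hq ix assms(1) show False by (simp add: divide_le_0_iff)
  qed
  then obtain q where q: "q \<in> c P" "dir_height (c P) ?H = infdist q ?H"
    using dir_height_attained[OF fc] by blast
  have a0: "\<alpha> > 0" using assms(1) by simp
  have "0 \<le> infdist x ?H / \<alpha>" using ix a0 by simp
  hence "(infdist x ?H / \<alpha>)^2 \<le> (infdist q ?H)^2" using hq q(2) by (simp add: power_mono)
  hence "(infdist x ?H / \<alpha>)^2 * gram_det ys \<le> (infdist q ?H)^2 * gram_det ys"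
    using g by (simp add: mult_right_mono)
  moreover have "(infdist x ?H / \<alpha>)^2 * gram_det ys = gram_det (x#ys) / \<alpha>^2"
    by (simp add: gram_det_Cons power_divide)
  ultimately show ?thesis using q(1) by (auto simp: gram_det_Cons)
qed
lemma iterate_replace:
  fixes U C :: "'a::euclidean_space set" and \<alpha> :: real and k :: nat
  assumes a1: "\<alpha> \<ge> 1"
    and step: "\<And>x ys. x \<in> U \<Longrightarrow> gram_det (x#ys) > 0 \<Longrightarrow> length ys = k - 1 \<Longrightarrow>
                 \<exists>q\<in>C. gram_det (q#ys) \<ge> gram_det (x#ys) / \<alpha>^2"
  shows "length (as @ bs) = k \<Longrightarrow> set as \<subseteq> U \<Longrightarrow> set bs \<subseteq> C \<Longrightarrow> gram_det (as @ bs) > 0 \<Longrightarrow>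
         \<exists>zs. set zs \<subseteq> C \<and> length zs = k \<and> gram_det zs \<ge> gram_det (as @ bs) / \<alpha>^(2 * length as)"
proof (induction as arbitrary: bs)
  case Nil
  thus ?case by (intro exI[of _ bs]) simp
next
  case (Cons a as)
  have a0: "\<alpha> > 0" using a1 by simp
  obtain q where q: "q \<in> C" "gram_det (q # as @ bs) \<ge> gram_det (a # as @ bs) / \<alpha>^2"
    using step[of a "as @ bs"] Cons.prems by auto
  have pos: "gram_det (q # as @ bs) > 0"
    using q(2) Cons.prems(4) a0 by (smt (verit) divide_pos_pos zero_less_power append_Cons)
  have rot: "gram_det (as @ (bs @ [q])) = gram_det (q # as @ bs)"
    using gram_det_rotate[of "as @ bs" q] by simp
  obtain zs where zs: "set zs \<subseteq> C" "length zs = k"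
      "gram_det zs \<ge> gram_det (as @ (bs @ [q])) / \<alpha>^(2 * length as)"
    using Cons.IH[of "bs @ [q]"] Cons.prems q(1) pos rot by auto
  have "gram_det ((a # as) @ bs) / \<alpha>^(2 * length (a # as)) = (gram_det (a # as @ bs) / \<alpha>^2) / \<alpha>^(2 * length as)"
    by (simp add: power_add power2_eq_square field_simps)
  also have "\<dots> \<le> gram_det (q # as @ bs) / \<alpha>^(2 * length as)"
    by (rule divide_right_mono[OF q(2)]) (use a0 in simp)
  also have "\<dots> \<le> gram_det zs" using zs(3) rot by simp
  finally show ?case using zs by blast
qed

theorem corollary3p4:
  fixes c :: "'a::euclidean_space set \<Rightarrow> 'a set" and k :: nat and \<alpha> :: real
  assumes "1 \<le> k" and "k \<le> DIM('a)" and "\<alpha> \<ge> 1"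
    and "\<And>P. finite P \<Longrightarrow> c P \<subseteq> P \<and> approx_coreset_height \<alpha> k (c P) P"
  shows "\<forall>m::nat. m \<ge> 1 \<longrightarrow> (\<forall>Ps :: nat \<Rightarrow> 'a set. (\<forall>i<m. finite (Ps i)) \<longrightarrow>
           maxdet k (\<Union>i<m. c (Ps i)) \<ge> maxdet k (\<Union>i<m. Ps i) / \<alpha> ^ (2 * k))"
proof (intro allI impI)
  fix m :: nat and Ps :: "nat \<Rightarrow> 'a set"
  assume fin: "\<forall>i<m. finite (Ps i)"
  define U where "U = (\<Union>i<m. Ps i)"
  define C where "C = (\<Union>i<m. c (Ps i))"
  have fU: "finite U" using fin by (simp add: U_def)
  have CU: "C \<subseteq> U" using assms(4) fin by (force simp: U_def C_def)
  have fC: "finite C" using fU CU finite_subset by blast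
  have a0: "\<alpha> > 0" using assms(3) by simp
  have step: "\<exists>q\<in>C. gram_det (q#ys) \<ge> gram_det (x#ys) / \<alpha>^2"
    if xU: "x \<in> U" and xg: "gram_det (x#ys) > 0" and xl: "length ys = k - 1" for x ys
  proof -
    obtain i where i: "i < m" "x \<in> Ps i" using xU unfolding U_def by blast
    have "c (Ps i) \<subseteq> Ps i" "approx_coreset_height \<alpha> k (c (Ps i)) (Ps i)"
      using assms(4) fin i(1) by auto
    then obtain q where "q \<in> c (Ps i)" "gram_det (q#ys) \<ge> gram_det (x#ys) / \<alpha>^2"
      using replace_step[OF assms(3) _ _ _ i(2) xg xl] fin i(1) by blast
    thus ?thesis using i(1) by (auto simp: C_def)
  qed
  show "maxdet k C \<ge> maxdet k U / \<alpha> ^ (2 * k)"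
  proof (cases "maxdet k U = 0")
    case True
    thus ?thesis using maxdet_facts(1)[OF fC] by simp
  next
    case False
    then obtain xs where xs: "distinct xs" "set xs \<subseteq> U" "length xs = k" "maxdet k U = gram_det xs"
      using maxdet_facts(3)[OF fU, of k] by blast
    have "gram_det xs > 0" using xs(4) False gram_det_nonneg[of xs] by simp
    then obtain zs where zs: "set zs \<subseteq> C" "length zs = k" "gram_det zs \<ge> gram_det xs / \<alpha>^(2 * k)"
      using iterate_replace[where U=U and C=C and k=k and \<alpha>=\<alpha> and as=xs and bs="[]", OF assms(3) step] xs by auto
    have "gram_det zs > 0" using zs(3) \<open>gram_det xs > 0\<close> a0
      by (smt (verit) divide_pos_pos zero_less_power)
    hence "distinct zs" using gram_det_nonzero_distinct by force
    hence "gram_det zs \<le> maxdet k C" using maxdet_facts(2)[OF fC] zs by blast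
    thus ?thesis using zs(3) xs(4) by simp
  qed
qed

end
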